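(* Let $\mathfrak g=\mathfrak k\oplus\mathfrak m$ be a Pauli-spanned Cartan decomposition, and let $b_1\neq b_2$ be two commuting Pauli strings in $\tilde{\mathfrak m}$ lying in the same connected component of the frustration graph of $\mathfrak g$. Then there exists a Pauli string $k\in\tilde{\mathfrak k}$ with $[k,b_1]\neq0$ and $[k,b_2]\neq0$; i.e. $\tilde{\mathfrak k}^{12}$ is non-empty.
   Context: Pauli strings on $n$ qubits are tensor products of $I,X,Y,Z$, not all identity; two Pauli strings either commute or anticommute. A Pauli-spanned Cartan decomposition is $\mathfrak g=\mathfrak k\oplus\mathfrak m\subseteq\mathfrak{su}(2^n)$ with $\mathfrak k=\mathrm{span}_{i\mathbb R}\tilde{\mathfrak k}$, $\mathfrak m=\mathrm{span}_{i\mathbb R}\tilde{\mathfrak m}$, $\mathfrak g=\mathrm{span}_{i\mathbb R}\tilde{\mathfrak g}$ with $\tilde{\mathfrak g}=\tilde{\mathfrak k}\sqcup\tilde{\mathfrak m}$ the set of all Pauli strings (up to phase) $\sigma$ with $i\sigma\in\mathfrak g$, and $[\mathfrak k,\mathfrak k]\subseteq\mathfrak k$, $[\mathfrak m,\mathfrak m]\subseteq\mathfrak k$, $[\mathfrak k,\mathfrak m]\subseteq\mathfrak m$. The frustration graph of $\mathfrak g$ has vertex set $\tilde{\mathfrak g}$, with edges between anticommuting pairs. For Pauli strings $b_1,b_2,\dots$ and disjoint index lists, $\tilde{\mathfrak k}^{i_1i_2\dots}_{j_1j_2\dots}$ is the set of $k\in\tilde{\mathfrak k}$ anticommuting with every $b_{i_p}$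 and commuting with every $b_{j_q}$ (no condition on other indices). *)

theory Defs
  imports Main
begin

text \<open>Single-qubit Paulis up to phase, and their phase-free product.\<close>
datatype pauli = PI | PX | PY | PZ

fun pmul :: "pauli \<Rightarrow> pauli \<Rightarrow> pauli" where
  "pmul PI b = b"
| "pmul a PI = a"
| "pmul PX PX = PI" | "pmul PY PY = PI" | "pmul PZ PZ = PI"
| "pmul PX PY = PZ" | "pmul PY PX = PZ"
| "pmul PY PZ = PX" | "pmul PZ PY = PX"
| "pmul PZ PX = PY" | "pmul PX PZ = PY"

definition pauli_string :: "nat \<Rightarrow> pauli list \<Rightarrow> bool" where
  "pauli_string n s \<longleftrightarrow> length s = n \<and> (\<exists>i<n. s ! i \<noteq> PI)"

definition site_anticomm :: "pauli \<Rightarrow> pauli \<Rightarrow> bool" where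
  "site_anticomm a b \<longleftrightarrow> a \<noteq> PI \<and> b \<noteq> PI \<and> a \<noteq> b"

definition anticommute :: "pauli list \<Rightarrow> pauli list \<Rightarrow> bool" where
  "anticommute s t \<longleftrightarrow>
     odd (card {i. i < length s \<and> i < length t \<and> site_anticomm (s ! i) (t ! i)})"

text \<open>Product of Pauli strings up to phase (for anticommuting s, t the commutator
  [s,t] is a nonzero multiple of this product).\<close>
definition smul :: "pauli list \<Rightarrow> pauli list \<Rightarrow> pauli list" where
  "smul s t = map2 pmul s t"

text \<open>Pauli-spanned Cartan decomposition g = k + m with k = span K, m = span M.
  Since distinct Pauli strings are linearly independent and [s,t] is 0 if s,t commute
  and a nonzero multiple of s*t otherwise, the bracket conditions
  [k,k] \<subseteq> k, [m,m] \<subseteq> k, [k,m] \<subseteq> m are exactly the following closure conditions.\<close>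
definition pauli_cartan :: "nat \<Rightarrow> pauli list set \<Rightarrow> pauli list set \<Rightarrow> bool" where
  "pauli_cartan n K M \<longleftrightarrow>
     (\<forall>s\<in>K \<union> M. pauli_string n s) \<and> K \<inter> M = {} \<and>
     (\<forall>a\<in>K. \<forall>b\<in>K. anticommute a b \<longrightarrow> smul a b \<in> K) \<and>
     (\<forall>a\<in>M. \<forall>b\<in>M. anticommute a b \<longrightarrow> smul a b \<in> K) \<and>
     (\<forall>a\<in>K. \<forall>b\<in>M. anticommute a b \<longrightarrow> smul a b \<in> M)"

definition frustration_edges :: "pauli list set \<Rightarrow> (pauli list \<times> pauli list) set" where
  "frustration_edges G = {(a, b). a \<in> G \<and> b \<in> G \<and> anticommute a b}"

definition same_component :: "pauli list set \<Rightarrow> pauli list \<Rightarrow> pauli list \<Rightarrow> bool" where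
  "same_component G a b \<longleftrightarrow> a \<in> G \<and> b \<in> G \<and> (a, b) \<in> (frustration_edges G)\<^sup>*"

end

theory Submission
  imports Defs
begin

lemma sa_pmul: "site_anticomm (pmul x y) z = (site_anticomm x z \<noteq> site_anticomm y z)"
  by (cases x; cases y; cases z; simp add: site_anticomm_def)

lemma sa_sym: "site_anticomm x y = site_anticomm y x"
  by (auto simp: site_anticomm_def)

lemma anti_sym: "anticommute a b = anticommute b a"
proof -
  have "{i. i < length a \<and> i < length b \<and> site_anticomm (a ! i) (b ! i)}
      = {i. i < length b \<and> i < length a \<and> site_anticomm (b ! i) (a ! i)}"
    using sa_sym by blast
  then show ?thesis unfolding anticommute_def by simp
qed

lemma anti_self: "\<not> anticommute a a"
  unfolding anticommute_def site_anticomm_def by simp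

lemma card_symdiff_odd:
  assumes "finite A" "finite B"
  shows "odd (card ((A - B) \<union> (B - A))) = (odd (card A) \<noteq> odd (card B))"
proof -
  have e: "(A - B) \<union> (B - A) = (A \<union> B) - (A \<inter> B)" by blast
  have "card ((A \<union> B) - (A \<inter> B)) = card (A \<union> B) - card (A \<inter> B)"
    using assms by (intro card_Diff_subset) auto
  moreover have "card (A \<union> B) + card (A \<inter> B) = card A + card B"
    using card_Un_Int[OF assms] by simp
  moreover have "card (A \<inter> B) \<le> card (A \<union> B)"
    using assms by (intro card_mono) auto
  ultimately have "card ((A - B) \<union> (B - A)) + 2 * card (A \<inter> B) = card A + card B"
    unfolding e by linarith
  then show ?thesis by presburger
qed

lemma anti_smul:
  assumes "length a = n" "length b = n" "length c = n"
  shows "anticommute (smul a b) c = (anticommute a c \<noteq> anticommute b c)"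
proof -
  define A where "A = {i. i < n \<and> site_anticomm (a ! i) (c ! i)}"
  define B where "B = {i. i < n \<and> site_anticomm (b ! i) (c ! i)}"
  have "{i. i < length (smul a b) \<and> i < length c \<and> site_anticomm (smul a b ! i) (c ! i)}
        = (A - B) \<union> (B - A)"
    using assms by (auto simp: smul_def A_def B_def sa_pmul)
  moreover have "{i. i < length a \<and> i < length c \<and> site_anticomm (a ! i) (c ! i)} = A"
    using assms by (auto simp: A_def)
  moreover have "{i. i < length b \<and> i < length c \<and> site_anticomm (b ! i) (c ! i)} = B"
    using assms by (auto simp: B_def)
  moreover have "finite A" "finite B" by (auto simp: A_def B_def)
  ultimately show ?thesis unfolding anticommute_def by (simp only: card_symdiff_odd)
qed

lemma len_smul: "length a = n \<Longrightarrow> length b = n \<Longrightarrow> length (smul a b) = n"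
  by (simp add: smul_def)

lemma pmul_comm: "pmul x y = pmul y x" by (cases x; cases y; simp)

lemma smul_comm: "smul a b = smul b a"
  unfolding smul_def
  apply (induction a arbitrary: b)
   apply simp
  subgoal for x a b by (cases b) (auto simp: pmul_comm)
  done

lemma closed:
  assumes "pauli_cartan n K M" "a \<in> K \<union> M" "b \<in> K \<union> M" "anticommute a b"
  shows "smul a b \<in> K \<union> M"
proof -
  have "smul b a = smul a b" by (rule smul_comm)
  moreover have "anticommute b a" using assms(4) anti_sym by blast
  ultimately show ?thesis using assms unfolding pauli_cartan_def by (metis UnE UnI1 UnI2)
qed

lemma dist2:
  assumes pc: "pauli_cartan n K M"
    and r: "(a, b) \<in> (frustration_edges (K \<union> M))\<^sup>*" and aG: "a \<in> K \<union> M"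
  shows "a = b \<or> anticommute a b \<or> (\<exists>c\<in>K \<union> M. anticommute a c \<and> anticommute c b)"
  using r
proof (induction rule: rtrancl_induct)
  case base
  then show ?case by simp
next
  case (step b d)
  have bG: "b \<in> K \<union> M" and dG: "d \<in> K \<union> M" and bd: "anticommute b d"
    using step.hyps(2) by (auto simp: frustration_edges_def)
  have len: "\<And>s. s \<in> K \<union> M \<Longrightarrow> length s = n"
    using pc unfolding pauli_cartan_def pauli_string_def by blast
  show ?case
  proof (cases "anticommute a d \<or> a = d")
    case True then show ?thesis by blast
  next
    case nad: False
    from step.IH show ?thesis
    proof (elim disjE)
      assume "a = b" then show ?thesis using bd nad by blast
    next
      assume "anticommute a b" then show ?thesis using bd bG by blast
    next
      assume "\<exists>c\<in>K \<union> M. anticommute a c \<and> anticommute c b"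
      then obtain c where cG: "c \<in> K \<union> M" and ac: "anticommute a c" and cb: "anticommute c b" by blast
      show ?thesis
      proof (cases "anticommute a b")
        case True then show ?thesis using bd bG by blast
      next
        case nab: False
        show ?thesis
        proof (cases "anticommute c d")
          case True then show ?thesis using ac cG by blast
        next
          case ncd: False
          have "smul c b \<in> K \<union> M" using closed[OF pc cG bG cb] .
          moreover have "anticommute a (smul c b)"
            using anti_smul[of c n b a] len cG bG aG ac nab anti_sym by metis
          moreover have "anticommute (smul c b) d"
            using anti_smul[of c n b d] len cG bG dG ncd bd by metis
          ultimately show ?thesis by blast
        qed
      qed
    qed
  qed
qed

theorem corollaryC1:
  fixes n :: nat and K M :: "pauli list set" and b1 b2 :: "pauli list"
  assumes "pauli_cartan n K M"
    and "b1 \<in> M" and "b2 \<in> M" and "b1 \<noteq> b2"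
    and "\<not> anticommute b1 b2"
    and "same_component (K \<union> M) b1 b2"
  shows "\<exists>k\<in>K. anticommute k b1 \<and> anticommute k b2"
proof -
  have len: "\<And>s. s \<in> K \<union> M \<Longrightarrow> length s = n"
    using assms(1) unfolding pauli_cartan_def pauli_string_def by blast
  obtain c where cG: "c \<in> K \<union> M" and b1c: "anticommute b1 c" and cb2: "anticommute c b2"
    using dist2[OF assms(1)] assms unfolding same_component_def by blast
  show ?thesis
  proof (cases "c \<in> K")
    case True then show ?thesis using b1c cb2 anti_sym by blast
  next
    case False
    then have cM: "c \<in> M" using cG by blast
    have "smul b1 c \<in> K" using assms(1,2) cM b1c unfolding pauli_cartan_def by blast
    moreover have "anticommute (smul b1 c) b1"
    proof -
      have "length b1 = n" "length c = n" using len assms(2) cM by auto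
      then have "anticommute (smul b1 c) b1 = (anticommute b1 b1 \<noteq> anticommute c b1)"
        using anti_smul by blast
      then show ?thesis using anti_self b1c anti_sym by metis
    qed
    moreover have "anticommute (smul b1 c) b2"
      using anti_smul[of b1 n c b2] len assms(2,3,5) cM cb2 by (metis UnI2)
    ultimately show ?thesis by blast
  qed
qed

end
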